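(* Let $A,B\in\mathbb R^{\mathcal N\times\mathcal N}$ with $A$ invertible, and assume that among the generalized eigenvalues $\lambda\in\mathbb C$ of $Av=\lambda Bv$ there is a unique positive one $\lambda>0$ of smallest modulus, and that it is simple. Let $u,u^*$, $k$, $M$, $\tilde u^*$, $P$, $P^*$ be as in the context. Let $u_N,u_N^*\in\mathbb R^{\mathcal N}\setminus\{0\}$ and $k_N\in\mathbb R$ be such that $k_N\notin\sigma\big((PMP)|_{[\operatorname{Span}\{\tilde u^*\}]^\perp}\big)$ and $k_N\notin\sigma\big((P^*M^TP^* )|_{[\operatorname{Span}\{u\}]^\perp}\big)$. Define the residuals $R_N=(B-k_NA)u_N$ and $R_N^*=(B^T-k_NA^T)u_N^*$. Then $$\inf_{v\in\operatorname{Span}\{u\}}\|u_N-v\|\le C_N^u\|R_N\|,\qquad \inf_{v^*\in\operatorname{Span}\{u^*\}}\|u_N^*-v^*\|\le C_N^{u^*}\|R_N^*\|,$$ where $C_N^u=\|P(PMP-k_NI)^+PA^{-1}\|$ and $C_N^{u^*}=\|A^{-T}P^*(P^*M^TP^*-k_NI)^+P^*\|$.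
   Context: $\mathbb R^{\mathcal N}$ carries the Euclidean inner product $\langle\cdot,\cdot\rangle$ and norm $\|\cdot\|$; on matrices $\|\cdot\|$ is the induced operator norm. "Simple" means $k=1/\lambda$ is an algebraically simple eigenvalue of $M=A^{-1}B$. $u,u^*$ are unit vectors with $Au=\lambda Bu$, $A^Tu^*=\lambda B^Tu^*$; $\tilde u^*=A^Tu^*/\|A^Tu^*\|$; $P=I-\frac{u(\tilde u^* )^T}{\langle u,\tilde u^*\rangle}$, $P^*=I-\frac{\tilde u^*u^T}{\langle u,\tilde u^*\rangle}$ (here $\langle u,\tilde u^*\rangle\ne0$); $\mathbb R^{\mathcal N}=\operatorname{Span}\{u\}\oplus[\operatorname{Span}\{\tilde u^*\}]^\perp=\operatorname{Span}\{\tilde u^*\}\oplus[\operatorname{Span}\{u\}]^\perp$, and $PMP-k_NI$ leaves $[\operatorname{Span}\{\tilde u^*\}]^\perp$ invariant, $P^*M^TP^*-k_NI$ leaves $[\operatorname{Span}\{u\}]^\perp$ invariant. The operator $(PMP-k_NI)^+$ is the linear map equal to the inverse of $(PMP-k_NI)|_{[\operatorname{Span}\{\tilde u^*\}]^\perp}$ on $[\operatorname{Span}\{\tilde u^*\}]^\perp$ and equal to $0$ on $\operatorname{Span}\{u\}$; likewise $(P^*M^TP^*-k_NI)^+$ equals the inverse of $(P^*M^TP^*-k_NI)|_{[\operatorname{Span}\{u\}]^\perp}$ on $[\operatorname{Span}\{u\}]^\perp$ and $0$ on $\operatorname{Span}\{\tilde u^*\}$. $A^{-T}=(A^T)^{-1}$.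 *)

theory Defs
  imports "HOL-Analysis.Analysis" "HOL-Computational_Algebra.Polynomial"
begin

definition gen_eig :: "real^'n^'n \<Rightarrow> real^'n^'n \<Rightarrow> complex \<Rightarrow> bool" where
  "gen_eig A B mu \<longleftrightarrow> (\<exists>v::complex^'n. v \<noteq> 0 \<and>
     (\<chi> i j. complex_of_real (A$i$j)) *v v = mu *s ((\<chi> i j. complex_of_real (B$i$j)) *v v))"

definition charpoly :: "real^'n^'n \<Rightarrow> real poly" where
  "charpoly M = det (\<chi> i j. (if i = j then [:0, 1:] else 0) - [:M$i$j:])"

definition alg_simple :: "real^'n^'n \<Rightarrow> real \<Rightarrow> bool" where
  "alg_simple M k \<longleftrightarrow> order k (charpoly M) = 1"

definition restr_eig :: "real^'n^'n \<Rightarrow> (real^'n) set \<Rightarrow> real \<Rightarrow> bool" where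
  "restr_eig T S c \<longleftrightarrow> (\<exists>x\<in>S. x \<noteq> 0 \<and> T *v x = c *s x)"

text \<open>The map equal to the inverse of T restricted to S on S and equal to 0 on W
  (for complementary subspaces S, W): z = s + w maps to the y in S with T y = s.\<close>
definition pinv_on :: "('a::real_vector \<Rightarrow> 'a) \<Rightarrow> 'a set \<Rightarrow> 'a set \<Rightarrow> 'a \<Rightarrow> 'a" where
  "pinv_on T S W z = (THE y. y \<in> S \<and> (\<exists>w\<in>W. z = T y + w))"

definition outer :: "real^'n \<Rightarrow> real^'n \<Rightarrow> real^'n^'n" where
  "outer a b = (\<chi> i j. a$i * b$j)"

definition tilde_ustar :: "real^'n^'n \<Rightarrow> real^'n \<Rightarrow> real^'n" where
  "tilde_ustar A us = (1 / norm (transpose A *v us)) *s (transpose A *v us)"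

text \<open>Oblique projector I - a b^T / <a,b>; P = proj u ut, P^* = proj ut u.\<close>
definition proj :: "real^'n \<Rightarrow> real^'n \<Rightarrow> real^'n^'n" where
  "proj a b = mat 1 - (1 / (a \<bullet> b)) *\<^sub>R outer a b"

end

theory Submission
  imports Defs
begin


lemma ortho_pair_basis:
  fixes a b :: "real^'n"
  assumes na: "norm a = 1" and nb: "norm b = 1" and ab: "a \<bullet> b = 0"
  obtains S where "a \<in> S" "b \<in> S" "pairwise orthogonal S" "\<And>x. x \<in> S \<Longrightarrow> norm x = 1"
    "independent S" "card S = CARD('n)"
proof -
  have po: "pairwise orthogonal {a, b}"
    using ab by (auto simp: pairwise_def orthogonal_def inner_commute)
  obtain U where U: "U \<inter> (insert 0 {a,b}) = {}" "pairwise orthogonal ({a,b} \<union> U)"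
                  "span ({a,b} \<union> U) = span ({a,b} \<union> UNIV)"
    using orthogonal_extension_strong[OF po, of UNIV] by blast
  define S1 where "S1 = {a,b} \<union> U"
  have a0: "a \<noteq> 0" "b \<noteq> 0" using na nb by auto
  have S1: "0 \<notin> S1" "pairwise orthogonal S1" "span S1 = UNIV"
    using U a0 unfolding S1_def by auto
  have ind1: "independent S1"
    using S1 pairwise_orthogonal_independent by blast
  have card1: "card S1 = CARD('n)"
    using S1 ind1 by (simp add: indep_card_eq_dim_span)
  let ?S = "(\<lambda>x. x /\<^sub>R norm x) ` S1"
  show thesis
  proof
    show "a \<in> ?S" using na unfolding S1_def by (force simp: image_iff)
    show "b \<in> ?S" using nb unfolding S1_def by (force simp: image_iff)
    show "pairwise orthogonal ?S"
      using S1(2) by (auto simp: pairwise_def orthogonal_def)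
    show "\<And>x. x \<in> ?S \<Longrightarrow> norm x = 1"
      using S1(1) by (auto simp: field_split_simps)
    then show "independent ?S"
      by (metis \<open>pairwise orthogonal ?S\<close> norm_zero pairwise_orthogonal_independent zero_neq_one)
    have "inj_on (\<lambda>x. x /\<^sub>R norm x) S1"
      unfolding inj_on_def
      by (metis (full_types) S1(2) \<open>0 \<notin> S1\<close> inverse_nonzero_iff_nonzero norm_eq_zero orthogonal_scaleR orthogonal_self pairwise_def)
    then show "card ?S = CARD('n)"
      by (simp add: card_image card1)
  qed
qed

lemma ortho_pair_matrix:
  fixes a b :: "real^'n"
  assumes na: "norm a = 1" and nb: "norm b = 1" and ab: "a \<bullet> b = 0"
  obtains Q k j where "orthogonal_matrix Q" "k \<noteq> j" "Q *v axis k 1 = a" "Q *v axis j 1 = b"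
proof -
  obtain S where "a \<in> S" "b \<in> S" "pairwise orthogonal S" and noS: "\<And>x. x \<in> S \<Longrightarrow> norm x = 1"
    and "independent S" "card S = CARD('n)"
    using ortho_pair_basis[OF assms] by blast
  then obtain f where f: "bij_betw f (UNIV::'n set) S"
    by (metis finite_class.finite_UNIV finite_same_card_bij finiteI_independent)
  define k where "k = inv_into UNIV f a"
  define j where "j = inv_into UNIV f b"
  have fk: "f k = a" "f j = b" unfolding k_def j_def
    using f \<open>a \<in> S\<close> \<open>b \<in> S\<close> by (auto simp: bij_betw_inv_into_right)
  have "a \<noteq> b" using ab na by (metis inner_eq_zero_iff norm_zero zero_neq_one)
  then have kj: "k \<noteq> j" using fk by auto
  have [simp]: "\<And>i. norm (f i) = 1"
    using bij_betwE [OF f] by (blast intro: noS)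
  have [simp]: "\<And>i j. i \<noteq> j \<Longrightarrow> orthogonal (f i) (f j)"
    using \<open>pairwise orthogonal S\<close> f
    by (auto simp: pairwise_def bij_betw_def inj_on_def)
  show thesis
  proof
    show "orthogonal_matrix (\<chi> i j. f j $ i)"
      by (simp add: orthogonal_matrix_orthonormal_columns column_def)
    show "(\<chi> i j. f j $ i) *v axis k 1 = a"
      by (simp add: matrix_vector_mult_def axis_def fk if_distrib cong: if_cong)
    show "(\<chi> i j. f j $ i) *v axis j 1 = b"
      by (simp add: matrix_vector_mult_def axis_def fk if_distrib cong: if_cong)
  qed (fact kj)
qed

definition cpm :: "real^'n^'m \<Rightarrow> real poly^'n^'m" where
  "cpm A = (\<chi> i j. [:A$i$j:])"

lemma cpm_mult: "cpm (A ** B) = cpm A ** cpm B"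
  by (simp add: cpm_def matrix_matrix_mult_def vec_eq_iff sum_to_poly mult.commute)

lemma cpm_one: "cpm (mat 1) = mat 1"
  by (simp add: cpm_def mat_def vec_eq_iff)

lemma det_sim:
  fixes Q :: "real^'n^'n" and C :: "real poly^'n^'n"
  assumes "orthogonal_matrix Q"
  shows "det (cpm (transpose Q) ** C ** cpm Q) = det C"
proof -
  have "det (cpm (transpose Q)) * det (cpm Q) = 1"
    using assms by (metis cpm_mult cpm_one det_I det_mul orthogonal_matrix)
  then show ?thesis by (simp add: det_mul algebra_simps)
qed

lemma mat_rmul:
  fixes A :: "'a::comm_ring_1^'n^'n"
  shows "A ** mat c = (\<chi> i j. c * A$i$j)"
  unfolding matrix_matrix_mult_def mat_def
  by (auto simp: if_distrib if_distribR sum.delta'[OF finite] mult.commute cong: if_cong)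

lemma mat_mid:
  fixes A B :: "'a::comm_ring_1^'n^'n"
  shows "A ** mat c ** B = (\<chi> i j. c * (A ** B)$i$j)"
  unfolding mat_rmul by (simp add: matrix_matrix_mult_def vec_eq_iff sum_distrib_left mult.assoc)

lemma matrix_add_rdistrib': "((B + C) ** A) = (B ** A) + (C ** A)"
  by (simp add: matrix_matrix_mult_def vec_eq_iff sum.distrib distrib_right)

lemma poly_det: "poly (det C) x = det (\<chi> i j. poly (C$i$j) x)"
  by (simp add: det_def poly_sum poly_prod)

lemma charpoly_nz: "charpoly (M::real^'n^'n) \<noteq> 0"
proof
  assume h: "charpoly M = 0"
  define x where "x = onorm (\<lambda>v. M *v v) + 1"
  have bl: "bounded_linear (\<lambda>v. M *v v)"
    by (simp add: linear_conv_bounded_linear)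
  have "det (\<chi> i j. poly ((\<chi> i j. (if i = j then [:0, 1:] else 0) - [:M$i$j:]) $i$j) x) = 0"
    using h unfolding charpoly_def poly_det[symmetric] by simp
  moreover have "(\<chi> i j. poly ((\<chi> i j. (if i = j then [:0, 1:] else 0) - [:M$i$j:]) $i$j) x)
     = x *\<^sub>R mat 1 - M"
    by (simp add: vec_eq_iff mat_def)
  ultimately have "det (x *\<^sub>R mat 1 - M) = 0" by simp
  then have "\<not> invertible (x *\<^sub>R mat 1 - M)" by (simp add: invertible_det_nz)
  then obtain v where v: "(x *\<^sub>R mat 1 - M) *v v = 0" "v \<noteq> 0"
  proof -
    have "\<not> (\<forall>y. (x *\<^sub>R mat 1 - M) *v y = 0 \<longrightarrow> y = 0)"
      using matrix_left_invertible_ker[of "x *\<^sub>R mat 1 - M"]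
        invertible_left_inverse[of "x *\<^sub>R mat 1 - M"] \<open>\<not> invertible _\<close> by simp
    then show ?thesis using that by blast
  qed
  then have "M *v v = x *\<^sub>R v"
  proof -
    have "(x *\<^sub>R mat 1 - M) *v v = x *\<^sub>R v - M *v v"
      by (simp add: matrix_vector_mult_diff_rdistrib scaleR_matrix_vector_assoc[symmetric])
    then show ?thesis using v(1) by simp
  qed
  moreover have x1: "x \<ge> 1" using onorm_pos_le[OF bl] unfolding x_def by simp
  ultimately have "x * norm v \<le> (x - 1) * norm v"
    using onorm[OF bl, of v] unfolding x_def by simp
  then have "norm v \<le> 0" by (simp add: algebra_simps)
  then show False using v(2) by simp
qed

lemma vm_diff: "(x::real^'n) v* (A - B) = x v* A - x v* B"
  by (simp add: vec_eq_iff vector_matrix_mult_def sum_subtractf right_diff_distrib)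

lemma mv_scaleR: "(A::real^'n^'m) *v (c *\<^sub>R x) = c *\<^sub>R (A *v x)"
  by (simp add: matrix_vector_mult_def vec_eq_iff sum_distrib_left algebra_simps)

lemma entry_sim:
  fixes Q N :: "real^'n^'n"
  shows "(transpose Q ** N ** Q)$i$jj = column i Q \<bullet> (N *v column jj Q)"
proof -
  have "(transpose Q ** N ** Q)$i$jj = ((transpose Q ** N ** Q) *v axis jj 1)$i"
    by (simp add: matrix_vector_mult_basis column_def)
  also have "\<dots> = (transpose Q *v (N *v column jj Q))$i"
    by (metis matrix_vector_mul_assoc matrix_vector_mult_basis)
  also have "\<dots> = column i Q \<bullet> (N *v column jj Q)"
    by (simp add: matrix_mult_dot column_def transpose_def del: transpose_matrix_vector)
  finally show ?thesis .
qed

lemma det_two_zero_dvd: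
  fixes K :: "real^'n^'n"
  assumes kj: "kk \<noteq> j" and col: "\<And>i. K$i$kk = 0" and row: "\<And>i. K$j$i = 0"
  shows "Y^2 dvd det (mat Y + cpm K)"
  unfolding det_def
proof (rule dvd_sum)
  fix p assume "p \<in> {p. p permutes (UNIV::'n set)}"
  then have p: "p permutes (UNIV::'n set)" by simp
  define E where "E = mat Y + cpm K"
  have E: "\<And>i l. E$i$l = (if i = l then Y else 0) + [:K$i$l:]"
    by (simp add: E_def mat_def cpm_def)
  define f where "f = (\<lambda>i. E$i$(p i))"
  have "Y^2 dvd prod f UNIV"
  proof (cases "p j = kk")
    case True
    then have "f j = 0" using kj by (simp add: f_def E row)
    then have "prod f UNIV = 0"
      by (intro prod_zero) auto
    then show ?thesis by (metis dvd_0_right)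
  next
    case False
    define i0 where "i0 = inv p kk"
    have pi0: "p i0 = kk" unfolding i0_def using p by (simp add: permutes_inverses(1))
    have i0j: "i0 \<noteq> j" using False pi0 by auto
    have d1: "Y dvd f i0" using pi0 by (simp add: f_def E col)
    have d2: "Y dvd f j" by (simp add: f_def E row)
    have r1: "prod f UNIV = f i0 * prod f (UNIV - {i0})"
      by (rule prod.remove) auto
    have r2: "prod f (UNIV - {i0}) = f j * prod f (UNIV - {i0} - {j})"
      by (rule prod.remove) (use i0j in auto)
    have r: "prod f UNIV = (f i0 * f j) * prod f (UNIV - {i0} - {j})"
      unfolding r1 r2 by (simp only: mult.assoc)
    have "Y^2 dvd f i0 * f j"
      using mult_dvd_mono[OF d1 d2] by (simp only: power2_eq_square)
    then have "Y^2 dvd (f i0 * f j) * prod f (UNIV - {i0} - {j})"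
      by (rule dvd_mult2)
    then show ?thesis unfolding r .
  qed
  then show "Y^2 dvd of_int (sign p) * (\<Prod>i\<in>UNIV. (mat Y + cpm K)$i$(p i))"
    unfolding E_def f_def by (rule dvd_mult)
qed

lemma sim_lemma:
  fixes Q N :: "real^'n^'n"
  assumes "orthogonal_matrix Q"
  shows "cpm (transpose Q) ** (mat Y + cpm N) ** cpm Q = mat Y + cpm (transpose Q ** N ** Q)"
proof -
  have e1: "cpm (transpose Q) ** mat Y ** cpm Q = mat Y"
  proof -
    have "transpose Q ** Q = mat 1" using orthogonal_matrix[THEN iffD1, OF assms] .
    hence e: "cpm (transpose Q) ** cpm Q = mat 1" by (simp add: cpm_mult[symmetric] cpm_one)
    have "(\<chi> i j. Y * (mat 1::real poly^'n^'n)$i$j) = mat Y" by (simp add: vec_eq_iff mat_def)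
    then show ?thesis unfolding mat_mid e .
  qed
  have e2: "cpm (transpose Q) ** cpm N ** cpm Q = cpm (transpose Q ** N ** Q)"
    by (simp add: cpm_mult)
  show ?thesis
    by (simp only: matrix_add_ldistrib matrix_add_rdistrib' e1 e2)
qed





lemma simple_nonorth:
  fixes M :: "real^'n^'n"
  assumes ord: "order k (charpoly M) = 1" and Mu: "M *v u = k *\<^sub>R u" and u0: "u \<noteq> 0"
    and Mw: "w v* M = k *\<^sub>R w" and w0: "w \<noteq> 0"
  shows "u \<bullet> w \<noteq> 0"
proof
  assume uw: "u \<bullet> w = 0"
  define a where "a = (1/norm u) *\<^sub>R u"
  define b where "b = (1/norm w) *\<^sub>R w"
  have na: "norm a = 1" using u0 by (simp add: a_def)
  have nb: "norm b = 1" using w0 by (simp add: b_def)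
  have ab: "a \<bullet> b = 0" by (simp add: a_def b_def uw)
  obtain Q kk j where Q: "orthogonal_matrix Q" "kk \<noteq> j" "Q *v axis kk 1 = a" "Q *v axis j 1 = b"
    using ortho_pair_matrix[OF na nb ab] by blast
  have ca: "column kk Q = a" and cb: "column j Q = b"
    using Q by (simp_all add: matrix_vector_mult_basis)
  define N where "N = k *\<^sub>R mat 1 - M"
  have Na: "N *v a = 0"
    by (simp add: N_def a_def mv_scaleR matrix_vector_mult_diff_rdistrib
        scaleR_matrix_vector_assoc[symmetric] Mu)
  have Nb: "b v* N = 0"
  proof -
    have "b v* N = k *\<^sub>R b - b v* M"
      by (simp add: N_def vm_diff vector_scaleR_matrix_ac)
    moreover have "b v* M = k *\<^sub>R b"
      using Mw by (simp add: b_def scaleR_vector_matrix_assoc)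
    ultimately show ?thesis by simp
  qed
  define K where "K = transpose Q ** N ** Q"
  have col: "\<And>i. K$i$kk = 0" by (simp add: K_def entry_sim ca Na)
  have row: "\<And>i. K$j$i = 0" by (simp add: K_def entry_sim cb dot_lmul_matrix[symmetric] Nb)
  define Y where "Y = [:-k, 1:]"
  have C: "(\<chi> i j. (if i = j then [:0, 1:] else 0) - [:M$i$j:]) = mat Y + cpm N"
    by (simp add: vec_eq_iff mat_def cpm_def N_def Y_def)
  have sim: "cpm (transpose Q) ** (mat Y + cpm N) ** cpm Q = mat Y + cpm K"
    unfolding K_def by (rule sim_lemma[OF Q(1)])
  have "charpoly M = det (mat Y + cpm K)"
    unfolding charpoly_def C sim[symmetric] det_sim[OF Q(1)] ..
  then have "[:-k, 1:]^2 dvd charpoly M"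
    using det_two_zero_dvd[OF Q(2) col row] Y_def by simp
  then show False using order_divides[of k 2 "charpoly M"] ord charpoly_nz[of M] by simp
qed




lemma outer_mv: "outer a b *v x = (b \<bullet> x) *\<^sub>R a"
  by (simp add: outer_def matrix_vector_mult_def vec_eq_iff inner_vec_def sum_distrib_left
      algebra_simps)

lemma projv: "proj a b *v x = x - ((b \<bullet> x) / (a \<bullet> b)) *\<^sub>R a"
  unfolding proj_def
  by (simp add: matrix_vector_mult_diff_rdistrib scaleR_matrix_vector_assoc[symmetric] outer_mv)

lemma triple_mv: "((A::real^'n^'n) ** B ** C) *v x = A *v (B *v (C *v x))"
  by (simp add: matrix_vector_mul_assoc matrix_mul_assoc)

lemma gen_lemma:
  fixes K :: "real^'n^'n" and a b :: "real^'n" and k kN :: real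
  assumes Ka: "K *v a = k *\<^sub>R a" and Kb: "b v* K = k *\<^sub>R b" and c: "a \<bullet> b \<noteq> 0"
    and nre: "\<not> restr_eig (proj a b ** K ** proj a b) {x. x \<bullet> b = 0} kN"
  shows "linear (\<lambda>z. pinv_on (\<lambda>x. (proj a b ** K ** proj a b - kN *\<^sub>R mat 1) *v x)
                     {x. x \<bullet> b = 0} (span {a}) (proj a b *v z))"
    and "\<And>y. pinv_on (\<lambda>x. (proj a b ** K ** proj a b - kN *\<^sub>R mat 1) *v x)
                     {x. x \<bullet> b = 0} (span {a}) (proj a b *v (K *v y - kN *\<^sub>R y)) = proj a b *v y"
    and "\<And>y. proj a b *v (proj a b *v y) = proj a b *v y"
proof -
  define P where "P = proj a b"
  define T where "T = P ** K ** P - kN *\<^sub>R mat 1"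
  define S where "S = {x::real^'n. x \<bullet> b = 0}"
  define h where "h = pinv_on (\<lambda>x. T *v x) S (span {a})"
  have Pv: "\<And>x. P *v x = x - ((b \<bullet> x) / (a \<bullet> b)) *\<^sub>R a"
    unfolding P_def by (rule projv)
  have bP: "\<And>x. P *v x \<in> S"
    using c by (simp add: S_def Pv inner_diff_left inner_commute[of b])
  have PS: "\<And>x. x \<in> S \<Longrightarrow> P *v x = x"
    by (simp add: S_def Pv inner_commute)
  have PP: "\<And>y. P *v (P *v y) = P *v y" using PS bP by blast
  have bK: "\<And>x. b \<bullet> (K *v x) = k * (b \<bullet> x)"
    by (simp add: dot_lmul_matrix[symmetric] Kb)
  have KS: "\<And>x. x \<in> S \<Longrightarrow> K *v x \<in> S"
    by (simp add: S_def inner_commute bK)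
  have KP: "\<And>x. K *v (P *v x) = P *v (K *v x)"
    by (simp add: Pv matrix_vector_mult_diff_distrib mv_scaleR Ka bK)
  have Tv: "\<And>x. T *v x = P *v (K *v (P *v x)) - kN *\<^sub>R x"
    by (simp add: T_def matrix_vector_mult_diff_rdistrib triple_mv
        scaleR_matrix_vector_assoc[symmetric])
  have TS: "\<And>x. x \<in> S \<Longrightarrow> T *v x = K *v x - kN *\<^sub>R x"
    using Tv PS KS by simp
  have TSS: "\<And>x. x \<in> S \<Longrightarrow> T *v x \<in> S"
    using TS KS by (simp add: S_def inner_diff_left)
  have Tinj: "\<And>x. x \<in> S \<Longrightarrow> T *v x = 0 \<Longrightarrow> x = 0"
  proof (rule ccontr)
    fix x assume x: "x \<in> S" "T *v x = 0" "x \<noteq> 0"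
    have "(P ** K ** P) *v x = kN *s x"
      using x(2) by (simp add: Tv triple_mv scalar_mult_eq_scaleR)
    then show False using nre x unfolding restr_eig_def P_def S_def by blast
  qed
  have huniq: "\<And>y. y \<in> S \<Longrightarrow> h (T *v y) = y"
  proof -
    fix y assume y: "y \<in> S"
    show "h (T *v y) = y"
      unfolding h_def pinv_on_def
    proof (rule the_equality)
      show "y \<in> S \<and> (\<exists>w\<in>span {a}. T *v y = T *v y + w)"
        using y by (auto intro: bexI[of _ 0] span_zero)
    next
      fix y' assume "y' \<in> S \<and> (\<exists>w\<in>span {a}. T *v y = T *v y' + w)"
      then obtain w where y': "y' \<in> S" "w \<in> span {a}" "T *v y = T *v y' + w" by blast
      obtain r where r: "w = r *\<^sub>R a" using y'(2) by (auto simp: span_singleton)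
      have d: "T *v (y - y') = w" using y'(3) by (simp add: matrix_vector_mult_diff_distrib)
      have "y - y' \<in> S" using y y' by (simp add: S_def inner_diff_left)
      then have "T *v (y - y') \<in> S" by (rule TSS)
      then have "r * (a \<bullet> b) = 0" using d r by (simp add: S_def)
      then have "w = 0" using c r by simp
      then have "y - y' = 0" using Tinj[OF \<open>y - y' \<in> S\<close>] d by simp
      then show "y' = y" by simp
    qed
  qed
  have bT: "\<And>x. b \<bullet> (T *v x) = - kN * (b \<bullet> x)"
  proof -
    fix x
    have "b \<bullet> (P *v (K *v (P *v x))) = 0" using bP by (simp add: S_def inner_commute)
    then show "b \<bullet> (T *v x) = - kN * (b \<bullet> x)" by (simp add: Tv inner_diff_right)
  qed
  have surj: "\<And>z. z \<in> S \<Longrightarrow> \<exists>y\<in>S. T *v y = z"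
  proof -
    fix z assume z: "z \<in> S"
    define al where "al = (kN + 1) / (a \<bullet> b)"
    define g where "g = (\<lambda>x. T *v x + (al * (b \<bullet> x)) *\<^sub>R a)"
    have bg: "\<And>x. b \<bullet> g x = b \<bullet> x"
      using c by (simp add: g_def inner_add_right bT al_def inner_commute field_simps)
    have lg: "linear g"
      by (rule linearI) (simp_all add: g_def matrix_vector_right_distrib mv_scaleR inner_add_right
          algebra_simps)
    have g0: "\<And>x. g x = 0 \<Longrightarrow> x = 0"
    proof -
      fix x assume gx: "g x = 0"
      then have "b \<bullet> x = 0" using bg by (metis inner_zero_right)
      then have "x \<in> S" "T *v x = 0" using gx by (simp_all add: S_def g_def inner_commute)
      then show "x = 0" using Tinj by blast
    qed
    have "inj g" using lg g0 by (simp add: linear_injective_0)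
    then have "surj g" using lg by (simp add: linear_injective_imp_surjective)
    then obtain x where x: "g x = z" by (metis surjE)
    have "b \<bullet> x = 0" using bg[of x] x z by (simp add: S_def inner_commute)
    then have "x \<in> S" "T *v x = z" using x by (simp_all add: S_def g_def inner_commute)
    then show "\<exists>y\<in>S. T *v y = z" by blast
  qed
  have hP: "\<And>z. \<exists>y\<in>S. T *v y = P *v z \<and> h (P *v z) = y"
    using surj[OF bP] huniq by metis
  have lin: "linear (\<lambda>z. h (P *v z))"
  proof (rule linearI)
    fix x y
    obtain y1 where y1: "y1 \<in> S" "T *v y1 = P *v x" "h (P *v x) = y1" using hP by blast
    obtain y2 where y2: "y2 \<in> S" "T *v y2 = P *v y" "h (P *v y) = y2" using hP by blast
    have "P *v (x + y) = T *v (y1 + y2)"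
      using y1 y2 by (simp add: matrix_vector_right_distrib)
    moreover have "y1 + y2 \<in> S" using y1 y2 by (simp add: S_def inner_add_left)
    ultimately show "h (P *v (x + y)) = h (P *v x) + h (P *v y)"
      using huniq y1 y2 by simp
  next
    fix r x
    obtain y1 where y1: "y1 \<in> S" "T *v y1 = P *v x" "h (P *v x) = y1" using hP by blast
    have "P *v (r *\<^sub>R x) = T *v (r *\<^sub>R y1)"
      using y1 by (simp add: mv_scaleR)
    moreover have "r *\<^sub>R y1 \<in> S" using y1 by (simp add: S_def)
    ultimately show "h (P *v (r *\<^sub>R x)) = r *\<^sub>R h (P *v x)"
      using huniq y1 by simp
  qed
  have key: "\<And>y. h (P *v (K *v y - kN *\<^sub>R y)) = P *v y"
  proof -
    fix y
    have "P *v (K *v y - kN *\<^sub>R y) = T *v (P *v y)"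
      using TS[OF bP[of y]] KP[of y]
      by (simp add: matrix_vector_mult_diff_distrib mv_scaleR)
    then show "h (P *v (K *v y - kN *\<^sub>R y)) = P *v y" using huniq bP by simp
  qed
  show "linear (\<lambda>z. pinv_on (\<lambda>x. (proj a b ** K ** proj a b - kN *\<^sub>R mat 1) *v x)
                     {x. x \<bullet> b = 0} (span {a}) (proj a b *v z))"
    using lin unfolding h_def T_def P_def S_def .
  show "\<And>y. pinv_on (\<lambda>x. (proj a b ** K ** proj a b - kN *\<^sub>R mat 1) *v x)
                     {x. x \<bullet> b = 0} (span {a}) (proj a b *v (K *v y - kN *\<^sub>R y)) = proj a b *v y"
    using key unfolding h_def T_def P_def S_def .
  show "\<And>y. proj a b *v (proj a b *v y) = proj a b *v y"
    using PP unfolding P_def .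
qed




lemma inf_bound:
  fixes F :: "real^'n \<Rightarrow> real^'n"
  assumes "linear F" "F R = x - v" "v \<in> span {w}"
  shows "(INF v\<in>span {w}. norm (x - v)) \<le> onorm F * norm R"
proof -
  have "(INF v\<in>span {w}. norm (x - v)) \<le> norm (x - v)"
    by (rule cINF_lower) (auto intro: bdd_belowI[of _ 0] assms(3))
  also have "\<dots> = norm (F R)" using assms(2) by simp
  also have "\<dots> \<le> onorm F * norm R"
    using onorm assms(1) linear_conv_bounded_linear by blast
  finally show ?thesis .
qed

lemma inv_facts:
  assumes "invertible (A::real^'n^'n)"
  shows "A ** matrix_inv A = mat 1" "matrix_inv A ** A = mat 1"
proof -
  have "\<exists>A'. A ** A' = mat 1 \<and> A' ** A = mat 1" using assms unfolding invertible_def by blast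
  then have "A ** matrix_inv A = mat 1 \<and> matrix_inv A ** A = mat 1"
    unfolding matrix_inv_def by (rule someI_ex)
  then show "A ** matrix_inv A = mat 1" "matrix_inv A ** A = mat 1" by auto
qed

theorem proposition1:
  fixes A B :: "real^'n^'n" and lam kN :: real and u us uN usN :: "real^'n"
  assumes "invertible A"
    and "lam > 0" and "gen_eig A B (complex_of_real lam)"
    and "\<forall>mu. gen_eig A B mu \<and> mu \<noteq> complex_of_real lam \<longrightarrow> cmod mu > lam"
    and "alg_simple (matrix_inv A ** B) (1 / lam)"
    and "norm u = 1" and "A *v u = lam *s (B *v u)"
    and "norm us = 1" and "transpose A *v us = lam *s (transpose B *v us)"
    and "uN \<noteq> 0" and "usN \<noteq> 0"
    and "\<not> restr_eig (proj u (tilde_ustar A us) ** (matrix_inv A ** B) ** proj u (tilde_ustar A us))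
            {x. x \<bullet> tilde_ustar A us = 0} kN"
    and "\<not> restr_eig (proj (tilde_ustar A us) u ** transpose (matrix_inv A ** B) ** proj (tilde_ustar A us) u)
            {x. x \<bullet> u = 0} kN"
  shows "(INF v\<in>span {u}. norm (uN - v))
           \<le> onorm (\<lambda>z. proj u (tilde_ustar A us) *v
                 pinv_on (\<lambda>x. (proj u (tilde_ustar A us) ** (matrix_inv A ** B) ** proj u (tilde_ustar A us)
                                 - kN *\<^sub>R mat 1) *v x)
                         {x. x \<bullet> tilde_ustar A us = 0} (span {u})
                         (proj u (tilde_ustar A us) *v (matrix_inv A *v z)))
             * norm ((B - kN *\<^sub>R A) *v uN)
       \<and> (INF v\<in>span {us}. norm (usN - v))
           \<le> onorm (\<lambda>z. matrix_inv (transpose A) *v (proj (tilde_ustar A us) u *v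
                 pinv_on (\<lambda>x. (proj (tilde_ustar A us) u ** transpose (matrix_inv A ** B) ** proj (tilde_ustar A us) u
                                 - kN *\<^sub>R mat 1) *v x)
                         {x. x \<bullet> u = 0} (span {tilde_ustar A us})
                         (proj (tilde_ustar A us) u *v z)))
             * norm ((transpose B - kN *\<^sub>R transpose A) *v usN)"
proof -
  define M where "M = matrix_inv A ** B"
  define w where "w = transpose A *v us"
  define ut where "ut = tilde_ustar A us"
  define k where "k = 1 / lam"
  have lam0: "lam \<noteq> 0" using assms(2) by simp
  have iA: "A ** matrix_inv A = mat 1" "matrix_inv A ** A = mat 1" using inv_facts[OF assms(1)] by auto
  have iAt: "transpose A ** matrix_inv (transpose A) = mat 1" "matrix_inv (transpose A) ** transpose A = mat 1"
    using inv_facts[OF transpose_invertible[OF assms(1)]] by auto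
  have u0: "u \<noteq> 0" using assms(6) by auto
  have Mu: "M *v u = k *\<^sub>R u"
  proof -
    have "B *v u = k *\<^sub>R (A *v u)" using assms(7) lam0
      by (simp add: k_def scalar_mult_eq_scaleR)
    then have "M *v u = k *\<^sub>R ((matrix_inv A ** A) *v u)"
      by (simp add: M_def matrix_vector_mul_assoc[symmetric] mv_scaleR)
    then show ?thesis using iA by simp
  qed
  have w0: "w \<noteq> 0"
  proof
    assume "w = 0"
    then have "(matrix_inv (transpose A) ** transpose A) *v us = 0"
      by (simp add: w_def matrix_vector_mul_assoc[symmetric] del: transpose_matrix_vector)
    then have "us = 0" using iAt by simp
    then show False using assms(8) by simp
  qed
  have Bus: "us v* B = k *\<^sub>R w"
    using assms(9) lam0 by (simp add: w_def k_def scalar_mult_eq_scaleR)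
  have Mw: "w v* M = k *\<^sub>R w"
  proof -
    have "w v* M = us v* ((A ** matrix_inv A) ** B)"
      by (simp add: w_def M_def vector_matrix_mul_assoc matrix_mul_assoc)
    then show ?thesis using iA Bus by simp
  qed
  have ut_def': "ut = (1 / norm w) *\<^sub>R w" by (simp add: ut_def w_def tilde_ustar_def scalar_mult_eq_scaleR)
  have ut0: "ut \<noteq> 0" using w0 ut_def' by simp
  have Mut: "ut v* M = k *\<^sub>R ut"
    by (simp add: ut_def' scaleR_vector_matrix_assoc Mw)
  have ord: "order k (charpoly M) = 1" using assms(5) by (simp add: alg_simple_def M_def k_def)
  have c: "u \<bullet> ut \<noteq> 0" by (rule simple_nonorth[OF ord Mu u0 Mut ut0])
  note G1 = gen_lemma[of M u k ut kN, OF Mu Mut c assms(12)[folded M_def ut_def]]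
  have MtU: "transpose M *v ut = k *\<^sub>R ut" using Mut by simp
  have MtK: "u v* transpose M = k *\<^sub>R u" using Mu by simp
  have c2: "ut \<bullet> u \<noteq> 0" using c by (simp add: inner_commute)
  note G2 = gen_lemma[of "transpose M" ut k u kN, OF MtU MtK c2 assms(13)[folded M_def ut_def]]
  show ?thesis
    unfolding M_def[symmetric] ut_def[symmetric]
  proof
    let ?h = "\<lambda>z. pinv_on (\<lambda>x. (proj u ut ** M ** proj u ut - kN *\<^sub>R mat 1) *v x)
                 {x. x \<bullet> ut = 0} (span {u}) (proj u ut *v z)"
    let ?F = "\<lambda>z. proj u ut *v ?h (matrix_inv A *v z)"
    have lin: "linear ?F"
      using linear_compose[OF linear_compose[OF matrix_vector_mul_linear[of "matrix_inv A"] G1(1)]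
        matrix_vector_mul_linear[of "proj u ut"]] by (simp add: o_def)
    have R: "matrix_inv A *v ((B - kN *\<^sub>R A) *v uN) = M *v uN - kN *\<^sub>R uN"
    proof -
      have "matrix_inv A *v ((B - kN *\<^sub>R A) *v uN)
          = M *v uN - kN *\<^sub>R ((matrix_inv A ** A) *v uN)"
        by (simp add: M_def matrix_vector_mult_diff_rdistrib matrix_vector_mult_diff_distrib
            scaleR_matrix_vector_assoc[symmetric] mv_scaleR matrix_vector_mul_assoc[symmetric])
      then show ?thesis using iA by simp
    qed
    have "?F ((B - kN *\<^sub>R A) *v uN) = uN - ((ut \<bullet> uN) / (u \<bullet> ut)) *\<^sub>R u"
      unfolding R G1(2) G1(3) by (rule projv)
    then show "(INF v\<in>span {u}. norm (uN - v)) \<le> onorm ?F * norm ((B - kN *\<^sub>R A) *v uN)"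
      by (rule inf_bound[OF lin]) (simp add: span_base span_mul)
  next
    let ?h = "\<lambda>z. pinv_on (\<lambda>x. (proj ut u ** transpose M ** proj ut u - kN *\<^sub>R mat 1) *v x)
                 {x. x \<bullet> u = 0} (span {ut}) (proj ut u *v z)"
    let ?F = "\<lambda>z. matrix_inv (transpose A) *v (proj ut u *v ?h z)"
    have lin: "linear ?F"
      using linear_compose[OF linear_compose[OF G2(1) matrix_vector_mul_linear[of "proj ut u"]]
         matrix_vector_mul_linear[of "matrix_inv (transpose A)"]] by (simp add: o_def)
    define y where "y = transpose A *v usN"
    have R: "(transpose B - kN *\<^sub>R transpose A) *v usN = transpose M *v y - kN *\<^sub>R y"
    proof -
      have "transpose M *v y = usN v* (A ** matrix_inv A ** B)"
        by (simp add: y_def M_def vector_matrix_mul_assoc matrix_mul_assoc)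
      then have "transpose M *v y = usN v* B" using iA by simp
      then show ?thesis
        by (simp add: y_def matrix_vector_mult_diff_rdistrib scaleR_matrix_vector_assoc[symmetric]
            del: transpose_matrix_vector) simp
    qed
    have Ainvut: "matrix_inv (transpose A) *v ut = (1 / norm w) *\<^sub>R us"
    proof -
      have "matrix_inv (transpose A) *v ut = (1 / norm w) *\<^sub>R ((matrix_inv (transpose A) ** transpose A) *v us)"
        by (simp add: ut_def' w_def mv_scaleR matrix_vector_mul_assoc[symmetric] del: transpose_matrix_vector)
      then show ?thesis using iAt by simp
    qed
    have Ainvy: "matrix_inv (transpose A) *v y = usN"
    proof -
      have "matrix_inv (transpose A) *v y = (matrix_inv (transpose A) ** transpose A) *v usN"
        by (simp add: y_def matrix_vector_mul_assoc[symmetric] del: transpose_matrix_vector)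
      then show ?thesis using iAt by simp
    qed
    have "?F ((transpose B - kN *\<^sub>R transpose A) *v usN)
        = matrix_inv (transpose A) *v (proj ut u *v y)"
      unfolding R G2(2) G2(3) ..
    also have "\<dots> = usN - (((u \<bullet> y) / (ut \<bullet> u)) / norm w) *\<^sub>R us"
      unfolding projv
      by (simp add: matrix_vector_mult_diff_distrib mv_scaleR Ainvut Ainvy del: transpose_matrix_vector)
    finally show "(INF v\<in>span {us}. norm (usN - v)) \<le> onorm ?F * norm ((transpose B - kN *\<^sub>R transpose A) *v usN)"
      by (rule inf_bound[OF lin]) (simp add: span_base span_mul)
  qed
qed


end
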